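(* Under Assumptions 2 and 3 below, the iterates of Algorithm 2Direction satisfy, for every $t\ge0$, $$\mathbb E_t\|k^{t+1}-\nabla f(z^{t+1})\|^2\le2p\,\mathbb E_t\|v^t-\nabla f(z^t)\|^2+8pL\,D_f(z^t,y^{t+1})+4pL^2\,\mathbb E_t\|x^{t+1}-y^{t+1}\|^2+(1-p)\|k^t-\nabla f(z^t)\|^2,$$ where $D_f(x,y)=f(x)-f(y)-\langle\nabla f(y),x-y\rangle$.
   Context: Setting: $f=\frac1n\sum_{i=1}^nf_i$, $f_i:\mathbb R^d\to\mathbb R$ differentiable. Assumption 2: $f$ is $L$-smooth. Assumption 3: each $f_i$ is convex and $f$ is $\mu$-strongly convex ($\mu\ge0$) with minimizer $x^*$. All compressor calls and the coins $c^t$ use independent fresh randomness. Compressor classes: $\mathbb U(\omega)$ ($\omega\ge0$) = stochastic maps $\mathcal C$ with $\mathbb E\mathcal C(x)=x$, $\mathbb E\|\mathcal C(x)-x\|^2\le\omega\|x\|^2$; $\mathbb B(\alpha)$ ($\alpha\in(0,1]$) = possibly stochastic maps with $\mathbb E\|\mathcal C(x)-x\|^2\le(1-\alpha)\|x\|^2$. Algorithm 2Direction: compressors $\mathcal C_i^{D,y},\mathcal C_i^{D,z}\in\mathbb U(\omega)$ (workers), $\mathcal C^P\in\mathbb B(\alpha)$ (server); parameters $\bar L>0$, $\mu\ge0$, $p\in(0,1]$, $\Gamma_0\ge1$, $\tau\in(0,1]$, $x^0,h_1^0,\dots,h_n^0,k^0,v^0\in\mathbb R^d$. Set $\beta=1/(\omega+1)$,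 $w^0=z^0=u^0=x^0$, $h^0=\frac1n\sum_ih_i^0$, $\theta_{\min}=\frac14\min\{1,\alpha/p,\tau/p,\beta/p\}$. For $t=0,1,\dots$: let $\bar\theta_{t+1}$ be the largest root of $p\bar L\Gamma_t\theta^2+p(\bar L+\Gamma_t\mu)\theta-(\bar L+\Gamma_t\mu)=0$, $\theta_{t+1}=\min\{\bar\theta_{t+1},\theta_{\min}\}$, $\gamma_{t+1}=p\theta_{t+1}\Gamma_t/(1-p\theta_{t+1})$, $\Gamma_{t+1}=\Gamma_t+\gamma_{t+1}$; $y^{t+1}=\theta_{t+1}w^t+(1-\theta_{t+1})z^t$; $m_i^{t,y}=\mathcal C_i^{D,y}(\nabla f_i(y^{t+1})-h_i^t)$; $g^{t+1}=h^t+\frac1n\sum_im_i^{t,y}$; $u^{t+1}=\arg\min_x\{\langle g^{t+1},x\rangle+\frac{\bar L+\Gamma_t\mu}{2\gamma_{t+1}}\|x-u^t\|^2+\frac\mu2\|x-y^{t+1}\|^2\}$; $q^{t+1}=\arg\min_x\{\langle k^t,x\rangle+\frac{\bar L+\Gamma_t\mu}{2\gamma_{t+1}}\|x-w^t\|^2+\frac\mu2\|x-y^{t+1}\|^2\}$; $w^{t+1}=q^{t+1}+\mathcal C^P(u^{t+1}-q^{t+1})$; $x^{t+1}=\theta_{t+1}u^{t+1}+(1-\theta_{t+1})z^t$; draw $c^t\sim\mathrm{Bernoulli}(p)$, and set $(k^{t+1},z^{t+1})=(v^t,x^{t+1})$ if $c^t=1$, $(k^{t+1},z^{t+1})=(k^t,z^t)$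 if $c^t=0$; $m_i^{t,z}=\mathcal C_i^{D,z}(\nabla f_i(z^{t+1})-h_i^t)$; $h_i^{t+1}=h_i^t+\beta m_i^{t,z}$; $v^{t+1}=(1-\tau)v^t+\tau(h^t+\frac1n\sum_im_i^{t,z})$; $h^{t+1}=h^t+\frac\beta n\sum_im_i^{t,z}$. $\mathbb E_t$ denotes conditional expectation given the randomness of the first $t$ iterations. *)

theory Defs
  imports "HOL-Probability.Probability"
begin

definition bregman :: "('a::real_inner \<Rightarrow> real) \<Rightarrow> ('a \<Rightarrow> 'a) \<Rightarrow> 'a \<Rightarrow> 'a \<Rightarrow> real" where
  "bregman f gf x y = f x - f y - inner (gf y) (x - y)"

definition is_gradient :: "('a::real_inner \<Rightarrow> real) \<Rightarrow> ('a \<Rightarrow> 'a) \<Rightarrow> bool" where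
  "is_gradient f gf \<longleftrightarrow> (\<forall>x. (f has_derivative (\<lambda>h. inner (gf x) h)) (at x))"

definition L_smooth :: "('a::real_inner \<Rightarrow> 'a) \<Rightarrow> real \<Rightarrow> bool" where
  "L_smooth gf L \<longleftrightarrow> (\<forall>x y. norm (gf x - gf y) \<le> L * norm (x - y))"

definition strongly_convex :: "('a::real_inner \<Rightarrow> real) \<Rightarrow> ('a \<Rightarrow> 'a) \<Rightarrow> real \<Rightarrow> bool" where
  "strongly_convex f gf mu \<longleftrightarrow>
     (\<forall>x y. f y \<ge> f x + inner (gf x) (y - x) + mu / 2 * (norm (y - x))\<^sup>2)"

definition theta_bar :: "real \<Rightarrow> real \<Rightarrow> real \<Rightarrow> real \<Rightarrow> real" where
  "theta_bar Lbar mu p Gam =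
     (GREATEST \<theta>::real. p * Lbar * Gam * \<theta>\<^sup>2 + p * (Lbar + Gam * mu) * \<theta> - (Lbar + Gam * mu) = 0)"

definition theta_min :: "real \<Rightarrow> real \<Rightarrow> real \<Rightarrow> real \<Rightarrow> real" where
  "theta_min alpha tau omega p =
     1/4 * min 1 (min (alpha / p) (min (tau / p) ((1 / (omega + 1)) / p)))"

definition theta_next :: "real \<Rightarrow> real \<Rightarrow> real \<Rightarrow> real \<Rightarrow> real \<Rightarrow> real \<Rightarrow> real \<Rightarrow> real" where
  "theta_next Lbar mu p Gam alpha tau omega =
     min (theta_bar Lbar mu p Gam) (theta_min alpha tau omega p)"

definition gamma_next :: "real \<Rightarrow> real \<Rightarrow> real \<Rightarrow> real" where
  "gamma_next p \<theta> Gam = p * \<theta> * Gam / (1 - p * \<theta>)"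

definition prox_step :: "'a::real_inner \<Rightarrow> real \<Rightarrow> real \<Rightarrow> 'a \<Rightarrow> 'a \<Rightarrow> 'a" where
  "prox_step g c mu u y =
     arg_min (\<lambda>x. inner g x + c / 2 * (norm (x - u))\<^sup>2 + mu / 2 * (norm (x - y))\<^sup>2) (\<lambda>_. True)"

end

theory Submission
  imports Defs
begin


lemma sq_tri: "(norm (a + b :: 'a::real_normed_vector))\<^sup>2 \<le> 2 * (norm a)\<^sup>2 + 2 * (norm b)\<^sup>2"
proof -
  have "norm (a+b) \<le> norm a + norm b" by (rule norm_triangle_ineq)
  hence "(norm (a+b))\<^sup>2 \<le> (norm a + norm b)\<^sup>2" by (simp add: power_mono)
  also have "\<dots> \<le> 2 * (norm a)\<^sup>2 + 2 * (norm b)\<^sup>2"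
    using sum_squares_ge_zero[of "norm a - norm b" 0] by (simp add: power2_eq_square algebra_simps)
  finally show ?thesis .
qed

lemma theta_bar_pos:
  assumes "Lbar > 0" "p > 0" "Gam \<ge> 1" "mu \<ge> 0"
  shows "theta_bar Lbar mu p Gam > 0"
proof -
  define A where "A = p * Lbar * Gam"
  define B where "B = Lbar + Gam * mu"
  have A: "A > 0" using assms by (simp add: A_def)
  have B: "B > 0" using assms unfolding B_def by (simp add: add_pos_nonneg)
  define D where "D = (p*B)\<^sup>2 + 4*A*B"
  define s where "s = sqrt D"
  have D: "D > (p*B)\<^sup>2" using A B by (simp add: D_def)
  have s2: "s\<^sup>2 = D" using D unfolding s_def
    by (smt (verit) real_sqrt_pow2 zero_le_power2)
  have s0: "s \<ge> 0" unfolding s_def using D by (smt (verit) real_sqrt_ge_zero zero_le_power2)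
  have spB: "s > p*B"
  proof (rule ccontr)
    assume "\<not> s > p*B"
    hence "s \<le> p*B" by simp
    hence "s\<^sup>2 \<le> (p*B)\<^sup>2" using s0 by (simp add: power_mono)
    thus False using s2 D by simp
  qed
  define r where "r = (s - p*B) / (2*A)"
  have r0: "r > 0" unfolding r_def using spB A by simp
  have Pr: "A * r\<^sup>2 + p * B * r - B = 0"
  proof -
    have "A * r\<^sup>2 + p * B * r - B = (s\<^sup>2 - (p*B)\<^sup>2 - 4*A*B) / (4*A)"
      unfolding r_def using A by (simp add: field_simps power2_eq_square)
    thus ?thesis using s2 D_def by simp
  qed
  have "theta_bar Lbar mu p Gam = r"
    unfolding theta_bar_def
  proof (rule Greatest_equality)
    show "p * Lbar * Gam * r\<^sup>2 + p * (Lbar + Gam * mu) * r - (Lbar + Gam * mu) = 0"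
      using Pr unfolding A_def B_def by (simp add: algebra_simps)
  next
    fix y assume "p * Lbar * Gam * y\<^sup>2 + p * (Lbar + Gam * mu) * y - (Lbar + Gam * mu) = 0"
    hence Py: "A * y\<^sup>2 + p * B * y - B = 0" unfolding A_def B_def by (simp add: algebra_simps)
    have "(y - r) * (A*(y+r) + p*B) = 0"
      using Py Pr by (simp add: algebra_simps power2_eq_square)
    show "y \<le> r"
    proof (rule ccontr)
      assume "\<not> y \<le> r"
      hence "y - r > 0" "A*(y+r) + p*B > 0" using A B r0 assms(2)
        by (auto intro!: add_pos_pos mult_pos_pos)
      hence "(y - r) * (A*(y+r) + p*B) > 0" by simp
      thus False using \<open>(y - r) * _ = 0\<close> by simp
    qed
  qed
  thus ?thesis using r0 by simp
qed

lemma prox_closed: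
  fixes g u y :: "'a::real_inner"
  assumes s: "c + mu > 0"
  shows "prox_step g c mu u y = (1/(c+mu)) *\<^sub>R (c *\<^sub>R u + mu *\<^sub>R y - g)"
proof -
  define xs where "xs = (1/(c+mu)) *\<^sub>R (c *\<^sub>R u + mu *\<^sub>R y - g)"
  define phi where "phi = (\<lambda>x. inner g x + c / 2 * (norm (x - u))\<^sup>2 + mu / 2 * (norm (x - y))\<^sup>2)"
  have key0: "g + c *\<^sub>R (xs - u) + mu *\<^sub>R (xs - y) = 0"
  proof -
    have "(c+mu) *\<^sub>R xs = c *\<^sub>R u + mu *\<^sub>R y - g" unfolding xs_def using s by simp
    thus ?thesis by (simp add: algebra_simps)
  qed
  have eq: "phi x = phi xs + (c+mu)/2 * (norm (x - xs))\<^sup>2" for x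
  proof -
    define d where "d = x - xs"
    have x: "x = xs + d" unfolding d_def by simp
    have nsq: "(norm (a + d))\<^sup>2 = (norm a)\<^sup>2 + 2 * inner a d + (norm d)\<^sup>2" for a :: 'a
      by (simp add: power2_norm_eq_inner inner_add_left inner_add_right inner_commute)
    have "phi (xs + d) = inner g xs + inner g d + c/2 * ((norm (xs - u))\<^sup>2 + 2 * inner (xs - u) d + (norm d)\<^sup>2)
         + mu/2 * ((norm (xs - y))\<^sup>2 + 2 * inner (xs - y) d + (norm d)\<^sup>2)"
    proof -
      have e1: "xs + d - u = (xs - u) + d" and e2: "xs + d - y = (xs - y) + d" by simp_all
      show ?thesis unfolding phi_def e1 e2 nsq inner_add_right by simp
    qed
    also have "\<dots> = phi xs + inner (g + c *\<^sub>R (xs - u) + mu *\<^sub>R (xs - y)) d + (c+mu)/2 * (norm d)\<^sup>2"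
      unfolding phi_def by (simp add: inner_add_left algebra_simps)
    finally have "phi (xs + d) = phi xs + inner (g + c *\<^sub>R (xs - u) + mu *\<^sub>R (xs - y)) d + (c+mu)/2 * (norm d)\<^sup>2" .
    hence "phi (xs + d) = phi xs + (c+mu)/2 * (norm d)\<^sup>2" using key0 by simp
    thus ?thesis unfolding d_def by simp
  qed
  have "arg_min phi (\<lambda>_. True) = xs"
    unfolding arg_min_def
  proof (rule some_equality)
    have "\<forall>y. phi xs \<le> phi y"
    proof
      fix y
      have "0 \<le> (c+mu)/2 * (norm (y - xs))\<^sup>2" using s by simp
      thus "phi xs \<le> phi y" using eq[of y] by linarith
    qed
    thus "is_arg_min phi (\<lambda>_. True) xs"
      unfolding is_arg_min_def by (simp add: not_less)
  next
    fix x assume "is_arg_min phi (\<lambda>_. True) x"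
    hence "\<not> phi xs < phi x" unfolding is_arg_min_def by auto
    hence "(c+mu)/2 * (norm (x - xs))\<^sup>2 \<le> 0" using eq[of x] by simp
    hence "(norm (x - xs))\<^sup>2 \<le> 0" using s
      by (simp add: mult_le_0_iff)
    thus "x = xs" by simp
  qed
  thus ?thesis unfolding prox_step_def phi_def xs_def .
qed



lemma descent:
  fixes f :: "'a::real_inner \<Rightarrow> real"
  assumes der: "\<And>x. (f has_derivative (\<lambda>h. inner (gf x) h)) (at x)"
    and lip: "\<And>x y. norm (gf x - gf y) \<le> L * norm (x - y)"
  shows "f (x + h) \<le> f x + inner (gf x) h + L / 2 * (norm h)\<^sup>2"
proof -
  define g where "g = (\<lambda>s::real. f (x + s *\<^sub>R h) - s * inner (gf x) h - L / 2 * s\<^sup>2 * (norm h)\<^sup>2)"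
  have "g 1 \<le> g 0"
  proof (rule DERIV_nonpos_imp_nonincreasing[of 0 1 g])
    fix s :: real assume s: "0 \<le> s" "s \<le> 1"
    have d1: "((\<lambda>s. x + s *\<^sub>R h) has_derivative (\<lambda>t. t *\<^sub>R h)) (at s)"
      by (auto intro!: derivative_eq_intros)
    have d2: "((\<lambda>s. f (x + s *\<^sub>R h)) has_derivative (\<lambda>t. inner (gf (x + s *\<^sub>R h)) (t *\<^sub>R h))) (at s)"
      using has_derivative_compose[OF d1 der] by (simp add: o_def)
    have d2': "((\<lambda>s. f (x + s *\<^sub>R h)) has_real_derivative inner (gf (x + s *\<^sub>R h)) h) (at s)"
      unfolding has_field_derivative_def using d2 by (simp add: mult.commute[of _ "inner _ _"])
    have d3: "(g has_real_derivative (inner (gf (x + s *\<^sub>R h)) h - inner (gf x) h - L / 2 * (2 * s) * (norm h)\<^sup>2)) (at s)"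
      unfolding g_def by (auto intro!: derivative_eq_intros d2')
    have "inner (gf (x + s *\<^sub>R h)) h - inner (gf x) h = inner (gf (x + s *\<^sub>R h) - gf x) h"
      by (simp add: inner_diff_left)
    also have "\<dots> \<le> norm (gf (x + s *\<^sub>R h) - gf x) * norm h"
      by (rule norm_cauchy_schwarz)
    also have "\<dots> \<le> (L * norm (s *\<^sub>R h)) * norm h"
      using lip[of "x + s *\<^sub>R h" x] by (simp add: mult_right_mono)
    also have "\<dots> = L / 2 * (2 * s) * (norm h)\<^sup>2"
      using s by (simp add: power2_eq_square)
    finally show "\<exists>y. (g has_real_derivative y) (at s) \<and> y \<le> 0"
      using d3 by (intro exI[of _ "inner (gf (x + s *\<^sub>R h)) h - inner (gf x) h - L / 2 * (2 * s) * (norm h)\<^sup>2"]) auto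
  qed simp
  thus ?thesis unfolding g_def by simp
qed

lemma cocoercive:
  fixes f :: "'a::real_inner \<Rightarrow> real"
  assumes der: "\<And>x. (f has_derivative (\<lambda>h. inner (gf x) h)) (at x)"
    and lip: "\<And>x y. norm (gf x - gf y) \<le> L * norm (x - y)"
    and cvx: "\<And>a b. f b \<ge> f a + inner (gf a) (b - a)"
    and L: "L \<ge> 0"
  shows "(norm (gf z - gf y))\<^sup>2 \<le> 2 * L * bregman f gf z y"
proof (cases "L = 0")
  case True
  have "norm (gf z - gf y) \<le> 0" using lip[of z y] True by simp
  hence "gf z = gf y" by simp
  thus ?thesis using True by simp
next
  case False
  hence Lp: "L > 0" using L by simp
  define d where "d = gf z - gf y"
  define w where "w = z - (1/L) *\<^sub>R d"
  have 1: "f w \<ge> f y + inner (gf y) (w - y)" by (rule cvx)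
  have 2: "f w \<le> f z + inner (gf z) (- (1/L) *\<^sub>R d) + L/2 * (norm (- (1/L) *\<^sub>R d))\<^sup>2"
    using descent[OF der lip, of z "- (1/L) *\<^sub>R d"] unfolding w_def by simp
  have n: "(norm (- (1/L) *\<^sub>R d))\<^sup>2 = (1/L)\<^sup>2 * (norm d)\<^sup>2"
    by (simp add: power_mult_distrib power_divide)
  have i1: "inner (gf y) (w - y) = inner (gf y) (z - y) - (1/L) * inner (gf y) d"
    unfolding w_def by (simp add: inner_diff_right)
  have i2: "inner (gf z) (- (1/L) *\<^sub>R d) = - (1/L) * inner (gf z) d" by simp
  have i3: "inner (gf z) d - inner (gf y) d = (norm d)\<^sup>2"
    unfolding d_def by (simp add: power2_norm_eq_inner inner_diff_left)
  have "f y + inner (gf y) (z - y) - (1/L) * inner (gf y) d \<le> f z - (1/L) * inner (gf z) d + L/2 * ((1/L)\<^sup>2 * (norm d)\<^sup>2)"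
  proof -
    have 3: "f w \<le> f z - (1/L) * inner (gf z) d + L/2 * ((1/L)\<^sup>2 * (norm d)\<^sup>2)"
      using 2 unfolding n i2 by simp
    show ?thesis using 1 3 i1 by linarith
  qed
  hence "(1/L) * (inner (gf z) d - inner (gf y) d) - L/2 * ((1/L)\<^sup>2 * (norm d)\<^sup>2) \<le> bregman f gf z y"
    unfolding bregman_def by (simp add: algebra_simps)
  hence "(1/L) * (norm d)\<^sup>2 - 1/(2*L) * (norm d)\<^sup>2 \<le> bregman f gf z y"
    using i3 Lp by (simp add: power2_eq_square)
  hence "(norm d)\<^sup>2 / (2*L) \<le> bregman f gf z y" using Lp by (simp add: field_simps)
  thus ?thesis unfolding d_def using Lp by (simp add: field_simps)
qed



lemma int_sq_bound:
  fixes f :: "'w \<Rightarrow> 'a::euclidean_space"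
  assumes g: "integrable M g" and f: "f \<in> borel_measurable M"
    and b: "\<And>\<omega>. (norm (f \<omega>))\<^sup>2 \<le> g \<omega>"
  shows "integrable M (\<lambda>\<omega>. (norm (f \<omega>))\<^sup>2)"
proof (rule Bochner_Integration.integrable_bound[OF g])
  show "(\<lambda>\<omega>. (norm (f \<omega>))\<^sup>2) \<in> borel_measurable M" using f by measurable
  show "AE \<omega> in M. norm ((norm (f \<omega>))\<^sup>2) \<le> norm (g \<omega>)"
  proof (intro AE_I2)
    fix \<omega>
    have "norm ((norm (f \<omega>))\<^sup>2) = (norm (f \<omega>))\<^sup>2" by simp
    also have "\<dots> \<le> g \<omega>" by (rule b)
    also have "\<dots> \<le> norm (g \<omega>)" by simp
    finally show "norm ((norm (f \<omega>))\<^sup>2) \<le> norm (g \<omega>)" .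
  qed
qed

lemma sq_int_sum:
  fixes Y :: "nat \<Rightarrow> 'w \<Rightarrow> 'a::euclidean_space"
  assumes "finite F" "\<And>i. i \<in> F \<Longrightarrow> Y i \<in> borel_measurable M"
    "\<And>i. i \<in> F \<Longrightarrow> integrable M (\<lambda>\<omega>. (norm (Y i \<omega>))\<^sup>2)"
  shows "integrable M (\<lambda>\<omega>. (norm (\<Sum>i\<in>F. Y i \<omega>))\<^sup>2)"
  using assms
proof (induction F rule: finite_induct)
  case empty
  then show ?case by simp
next
  case (insert j F)
  have m: "(\<lambda>\<omega>. \<Sum>i\<in>insert j F. Y i \<omega>) \<in> borel_measurable M"
    by (rule borel_measurable_sum) (use insert in auto)
  have ib: "integrable M (\<lambda>\<omega>. 2 * (norm (Y j \<omega>))\<^sup>2 + 2 * (norm (\<Sum>i\<in>F. Y i \<omega>))\<^sup>2)"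
    using insert by auto
  show ?case
  proof (rule int_sq_bound[OF ib m])
    fix \<omega>
    show "(norm (\<Sum>i\<in>insert j F. Y i \<omega>))\<^sup>2 \<le> 2 * (norm (Y j \<omega>))\<^sup>2 + 2 * (norm (\<Sum>i\<in>F. Y i \<omega>))\<^sup>2"
      using sq_tri[of "Y j \<omega>" "\<Sum>i\<in>F. Y i \<omega>"] insert(1,2) by simp
  qed
qed



theorem lemma9:
  fixes n :: nat
    and fi :: "nat \<Rightarrow> 'a::euclidean_space \<Rightarrow> real"
    and gfi :: "nat \<Rightarrow> 'a \<Rightarrow> 'a"
    and L mu Lbar p tau alpha omega Gam :: real
    and w z u k v :: 'a
    and h :: "nat \<Rightarrow> 'a"
    and N :: "'w measure"
    and my :: "nat \<Rightarrow> 'w \<Rightarrow> 'a"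
    and f :: "'a \<Rightarrow> real" and gf :: "'a \<Rightarrow> 'a" and hbar y1 :: 'a
    and \<theta> \<gamma> :: real and inp :: "nat \<Rightarrow> 'a"
    and g1 u1 x1 :: "'w \<Rightarrow> 'a" and k1 z1 :: "'w \<times> bool \<Rightarrow> 'a"
    and \<Omega> :: "('w \<times> bool) measure"
  assumes f_def: "f = (\<lambda>x. (\<Sum>i<n. fi i x) / real n)"
    and gf_def: "gf = (\<lambda>x. (1 / real n) *\<^sub>R (\<Sum>i<n. gfi i x))"
    and "hbar = (1 / real n) *\<^sub>R (\<Sum>i<n. h i)"
    and "\<theta> = theta_next Lbar mu p Gam alpha tau omega"
    and "\<gamma> = gamma_next p \<theta> Gam"
    and "y1 = \<theta> *\<^sub>R w + (1 - \<theta>) *\<^sub>R z"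
    and "inp = (\<lambda>i. gfi i y1 - h i)"
    and "g1 = (\<lambda>\<omega>. hbar + (1 / real n) *\<^sub>R (\<Sum>i<n. my i \<omega>))"
    and "u1 = (\<lambda>\<omega>. prox_step (g1 \<omega>) ((Lbar + Gam * mu) / \<gamma>) mu u y1)"
    and "x1 = (\<lambda>\<omega>. \<theta> *\<^sub>R u1 \<omega> + (1 - \<theta>) *\<^sub>R z)"
    and "k1 = (\<lambda>(\<omega>, c::bool). if c then v else k)"
    and "z1 = (\<lambda>(\<omega>, c::bool). if c then x1 \<omega> else z)"
    and "\<Omega> = N \<Otimes>\<^sub>M measure_pmf (bernoulli_pmf p)"
    and n_pos: "n \<ge> 1"
    and grad: "\<And>i. i < n \<Longrightarrow> is_gradient (fi i) (gfi i)"
    and smooth: "L_smooth gf L"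
    and conv_i: "\<And>i. i < n \<Longrightarrow> convex_on UNIV (fi i)"
    and mu_nonneg: "mu \<ge> 0"
    and strong: "strongly_convex f gf mu"
    and minimizer: "\<exists>xstar. \<forall>x. f xstar \<le> f x"
    and Lbar_pos: "Lbar > 0"
    and p_range: "0 < p" "p \<le> 1"
    and tau_range: "0 < tau" "tau \<le> 1"
    and alpha_range: "0 < alpha" "alpha \<le> 1"
    and omega_nonneg: "omega \<ge> 0"
    and Gam_ge: "Gam \<ge> 1"
    and N_prob: "prob_space N"
    and my_meas: "\<And>i. i < n \<Longrightarrow> my i \<in> borel_measurable N"
    and my_indep: "prob_space.indep_vars N (\<lambda>_. borel) my {..<n}"
    and my_int: "\<And>i. i < n \<Longrightarrow> integrable N (my i)"
    and my_unbiased: "\<And>i. i < n \<Longrightarrow> (\<integral>\<omega>. my i \<omega> \<partial>N) = inp i"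
    and my_var_int: "\<And>i. i < n \<Longrightarrow> integrable N (\<lambda>\<omega>. (norm (my i \<omega> - inp i))\<^sup>2)"
    and my_var: "\<And>i. i < n \<Longrightarrow> (\<integral>\<omega>. (norm (my i \<omega> - inp i))\<^sup>2 \<partial>N) \<le> omega * (norm (inp i))\<^sup>2"
  shows "(\<integral>\<xi>. (norm (k1 \<xi> - gf (z1 \<xi>)))\<^sup>2 \<partial>\<Omega>)
         \<le> 2 * p * (norm (v - gf z))\<^sup>2
           + 8 * p * L * bregman f gf z y1
           + 4 * p * L\<^sup>2 * (\<integral>\<xi>. (norm (x1 (fst \<xi>) - y1))\<^sup>2 \<partial>\<Omega>)
           + (1 - p) * (norm (k - gf z))\<^sup>2"
proof -
  note A = assms
  let ?B = "measure_pmf (bernoulli_pmf p)"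
  interpret N: prob_space N by (rule N_prob)
  interpret P: pair_prob_space N ?B
    by (simp add: pair_prob_space_def pair_sigma_finite_def N_prob prob_space_measure_pmf
        prob_space_imp_sigma_finite)
  have p0: "0 \<le> p" "p \<le> 1" using p_range by auto
  have lip: "\<And>x y. norm (gf x - gf y) \<le> L * norm (x - y)"
    using smooth unfolding L_smooth_def by blast
  have L0: "L \<ge> 0"
  proof -
    obtain b :: 'a where b: "b \<in> Basis" using nonempty_Basis by blast
    have "0 \<le> norm (gf b - gf 0)" by simp
    also have "\<dots> \<le> L * norm (b - 0)" by (rule lip)
    finally show ?thesis using b by simp
  qed
  have der: "(f has_derivative (\<lambda>h. inner (gf x) h)) (at x)" for x
  proof -
    have "((\<lambda>x. \<Sum>i<n. fi i x) has_derivative (\<lambda>h. \<Sum>i<n. inner (gfi i x) h)) (at x)"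
      by (rule has_derivative_sum) (use grad in \<open>auto simp: is_gradient_def\<close>)
    from has_derivative_scaleR_right[OF this, of "1 / real n"]
    have "((\<lambda>x. (1 / real n) *\<^sub>R (\<Sum>i<n. fi i x)) has_derivative (\<lambda>h. (1 / real n) *\<^sub>R (\<Sum>i<n. inner (gfi i x) h))) (at x)" .
    moreover have "(\<lambda>x. (1 / real n) *\<^sub>R (\<Sum>i<n. fi i x)) = f" unfolding f_def by auto
    moreover have "(\<lambda>h. (1 / real n) *\<^sub>R (\<Sum>i<n. inner (gfi i x) h)) = (\<lambda>h. inner (gf x) h)"
      unfolding gf_def by (simp add: inner_sum_left)
    ultimately show ?thesis by simp
  qed
  have cvx: "\<And>a b. f b \<ge> f a + inner (gf a) (b - a)"
  proof -
    fix a b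
    have "f b \<ge> f a + inner (gf a) (b - a) + mu / 2 * (norm (b - a))\<^sup>2"
      using strong unfolding strongly_convex_def by blast
    moreover have "mu / 2 * (norm (b - a))\<^sup>2 \<ge> 0" using mu_nonneg by simp
    ultimately show "f b \<ge> f a + inner (gf a) (b - a)" by linarith
  qed
  have coco: "(norm (gf z - gf y1))\<^sup>2 \<le> 2 * L * bregman f gf z y1"
    by (rule cocoercive[OF der lip cvx L0])
  have gfcont: "continuous_on UNIV gf"
  proof (rule lipschitz_on_continuous_on)
    show "L-lipschitz_on UNIV gf" unfolding lipschitz_on_def using L0 lip by (simp add: dist_norm)
  qed
  have gfmeas[measurable]: "gf \<in> borel_measurable borel"
    by (rule borel_measurable_continuous_onI[OF gfcont])
  have tmin0: "theta_min alpha tau omega p > 0"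
    unfolding theta_min_def using p_range tau_range alpha_range omega_nonneg by simp
  have tbar0: "theta_bar Lbar mu p Gam > 0"
    by (rule theta_bar_pos) (use Lbar_pos p_range Gam_ge mu_nonneg in auto)
  have th0: "\<theta> > 0" unfolding A(4) theta_next_def using tmin0 tbar0 by simp
  have th4: "\<theta> \<le> 1/4"
  proof -
    have "\<theta> \<le> theta_min alpha tau omega p" unfolding A(4) theta_next_def by simp
    moreover have "min 1 (min (alpha / p) (min (tau / p) ((1 / (omega + 1)) / p))) \<le> (1::real)" by simp
    ultimately show ?thesis unfolding theta_min_def by linarith
  qed
  have pth: "p * \<theta> \<le> 1/4"
  proof -
    have "p * \<theta> \<le> 1 * (1/4)" using p_range th0 th4 by (intro mult_mono) auto
    thus ?thesis by simp
  qed
  have gam0: "\<gamma> > 0" unfolding A(5) gamma_next_def using p_range th0 Gam_ge pth by simp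
  define cc where "cc = (Lbar + Gam * mu) / \<gamma>"
  have cc0: "cc > 0" unfolding cc_def using gam0 Lbar_pos Gam_ge mu_nonneg
    by (simp add: add_pos_nonneg)
  define s where "s = cc + mu"
  have s0: "s > 0" unfolding s_def using cc0 mu_nonneg by simp
  define S where "S = (\<lambda>\<omega>. \<Sum>i<n. my i \<omega>)"
  have Smeas[measurable]: "S \<in> borel_measurable N"
    unfolding S_def by (rule borel_measurable_sum) (use my_meas in auto)
  have x1eq: "x1 = (\<lambda>\<omega>. \<theta> *\<^sub>R ((1/s) *\<^sub>R (cc *\<^sub>R u + mu *\<^sub>R y1 - (hbar + (1 / real n) *\<^sub>R S \<omega>))) + (1 - \<theta>) *\<^sub>R z)"
  proof -
    have pc: "\<And>g. prox_step g cc mu u y1 = (1/s) *\<^sub>R (cc *\<^sub>R u + mu *\<^sub>R y1 - g)"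
      using prox_closed[OF s0[unfolded s_def]] unfolding s_def by blast
    show ?thesis unfolding A(10) A(9) A(8) S_def cc_def[symmetric] pc by simp
  qed
  have x1meas[measurable]: "x1 \<in> borel_measurable N" unfolding x1eq by measurable
  have my_sq: "integrable N (\<lambda>\<omega>. (norm (my i \<omega>))\<^sup>2)" if i: "i < n" for i
  proof (rule int_sq_bound[of N "\<lambda>\<omega>. 2 * (norm (my i \<omega> - inp i))\<^sup>2 + 2 * (norm (inp i))\<^sup>2"])
    show "integrable N (\<lambda>\<omega>. 2 * (norm (my i \<omega> - inp i))\<^sup>2 + 2 * (norm (inp i))\<^sup>2)"
      using my_var_int[OF i] by auto
    show "my i \<in> borel_measurable N" by (rule my_meas[OF i])
    fix \<omega> show "(norm (my i \<omega>))\<^sup>2 \<le> 2 * (norm (my i \<omega> - inp i))\<^sup>2 + 2 * (norm (inp i))\<^sup>2"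
      using sq_tri[of "my i \<omega> - inp i" "inp i"] by simp
  qed
  have S_sq: "integrable N (\<lambda>\<omega>. (norm (S \<omega>))\<^sup>2)"
    unfolding S_def by (rule sq_int_sum) (use my_meas my_sq in auto)
  define b0 where "b0 = \<theta> / s * (1 / real n)"
  define a0 where "a0 = (\<theta> / s) *\<^sub>R (cc *\<^sub>R u + mu *\<^sub>R y1 - hbar) + (1 - \<theta>) *\<^sub>R z - y1"
  have x1aff: "x1 \<omega> - y1 = a0 - b0 *\<^sub>R S \<omega>" for \<omega>
    unfolding x1eq a0_def b0_def by (simp add: algebra_simps)
  define X where "X = (\<lambda>\<omega>. (norm (x1 \<omega> - y1))\<^sup>2)"
  have Xmeas[measurable]: "X \<in> borel_measurable N" unfolding X_def by measurable
  have X0: "X \<omega> \<ge> 0" for \<omega> unfolding X_def by simp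
  have Xint: "integrable N X"
    unfolding X_def
  proof (rule int_sq_bound[of N "\<lambda>\<omega>. 2 * (norm a0)\<^sup>2 + 2 * (b0\<^sup>2 * (norm (S \<omega>))\<^sup>2)"])
    show "integrable N (\<lambda>\<omega>. 2 * (norm a0)\<^sup>2 + 2 * (b0\<^sup>2 * (norm (S \<omega>))\<^sup>2))"
      using S_sq by auto
    show "(\<lambda>\<omega>. x1 \<omega> - y1) \<in> borel_measurable N" by measurable
    fix \<omega>
    have "(norm (x1 \<omega> - y1))\<^sup>2 = (norm (a0 + (- b0) *\<^sub>R S \<omega>))\<^sup>2" unfolding x1aff by simp
    also have "\<dots> \<le> 2 * (norm a0)\<^sup>2 + 2 * (norm ((- b0) *\<^sub>R S \<omega>))\<^sup>2" by (rule sq_tri)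
    also have "(norm ((- b0) *\<^sub>R S \<omega>))\<^sup>2 = b0\<^sup>2 * (norm (S \<omega>))\<^sup>2"
      by (simp add: power_mult_distrib)
    finally show "(norm (x1 \<omega> - y1))\<^sup>2 \<le> 2 * (norm a0)\<^sup>2 + 2 * (b0\<^sup>2 * (norm (S \<omega>))\<^sup>2)" .
  qed
  define C1 where "C1 = 2 * (norm (v - gf z))\<^sup>2 + 8 * L * bregman f gf z y1"
  define K where "K = (norm (k - gf z))\<^sup>2"
  define F where "F = (\<lambda>\<xi>. (norm (k1 \<xi> - gf (z1 \<xi>)))\<^sup>2)"
  define G where "G = (\<lambda>\<xi>::'w \<times> bool. if snd \<xi> then C1 + 4 * L\<^sup>2 * X (fst \<xi>) else K)"
  have FG: "F \<xi> \<le> G \<xi>" for \<xi>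
  proof (cases \<xi>)
    case (Pair \<omega> c)
    show ?thesis
    proof (cases c)
      case False
      thus ?thesis unfolding F_def G_def K_def Pair A(11) A(12) by simp
    next
      case True
      have e: "F \<xi> = (norm (v - gf (x1 \<omega>)))\<^sup>2" unfolding F_def Pair A(11) A(12) using True by simp
      have g: "G \<xi> = C1 + 4 * L\<^sup>2 * X \<omega>" unfolding G_def Pair using True by simp
      have 1: "(norm (v - gf (x1 \<omega>)))\<^sup>2 \<le> 2 * (norm (v - gf z))\<^sup>2 + 2 * (norm (gf z - gf (x1 \<omega>)))\<^sup>2"
        using sq_tri[of "v - gf z" "gf z - gf (x1 \<omega>)"] by simp
      have 2: "(norm (gf z - gf (x1 \<omega>)))\<^sup>2 \<le> 2 * (norm (gf z - gf y1))\<^sup>2 + 2 * (norm (gf y1 - gf (x1 \<omega>)))\<^sup>2"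
        using sq_tri[of "gf z - gf y1" "gf y1 - gf (x1 \<omega>)"] by simp
      have 3: "(norm (gf y1 - gf (x1 \<omega>)))\<^sup>2 \<le> L\<^sup>2 * X \<omega>"
      proof -
        have "norm (gf y1 - gf (x1 \<omega>)) \<le> L * norm (x1 \<omega> - y1)"
          using lip[of y1 "x1 \<omega>"] by (simp add: norm_minus_commute)
        hence "(norm (gf y1 - gf (x1 \<omega>)))\<^sup>2 \<le> (L * norm (x1 \<omega> - y1))\<^sup>2"
          by (simp add: power_mono)
        thus ?thesis unfolding X_def by (simp add: power_mult_distrib)
      qed
      show ?thesis unfolding e g C1_def using 1 2 3 coco by linarith
    qed
  qed
  have F0: "F \<xi> \<ge> 0" for \<xi> unfolding F_def by simp
  have Fmeas: "F \<in> borel_measurable \<Omega>"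
  proof -
    have "F = (\<lambda>\<xi>. if snd \<xi> then (norm (v - gf (x1 (fst \<xi>))))\<^sup>2 else K)"
      unfolding F_def K_def A(11) A(12) by (auto split: prod.splits)
    thus ?thesis unfolding A(13) by simp
  qed
  have Gmeas: "G \<in> borel_measurable \<Omega>" unfolding G_def A(13) by simp
  have finB: "finite (set_pmf (bernoulli_pmf p))" by (rule finite_subset[OF subset_UNIV]) simp
  have intB: "integrable ?B h" for h :: "bool \<Rightarrow> real" by (rule integrable_measure_pmf_finite[OF finB])
  have Gint: "integrable \<Omega> G"
    unfolding A(13)
  proof (rule P.Fubini_integrable)
    show "G \<in> borel_measurable (N \<Otimes>\<^sub>M ?B)" using Gmeas unfolding A(13) .
    have "(\<lambda>\<omega>. \<integral>c. norm (G (\<omega>, c)) \<partial>?B) = (\<lambda>\<omega>. norm (C1 + 4 * L\<^sup>2 * X \<omega>) * p + norm K * (1 - p))"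
      unfolding G_def using p0 by simp
    moreover have "integrable N (\<lambda>\<omega>. norm (C1 + 4 * L\<^sup>2 * X \<omega>) * p + norm K * (1 - p))"
      using Xint by auto
    ultimately show "integrable N (\<lambda>\<omega>. \<integral>c. norm (G (\<omega>, c)) \<partial>?B)" by simp
    show "AE \<omega> in N. integrable ?B (\<lambda>c. G (\<omega>, c))" by (simp add: intB)
  qed
  have Fint: "integrable \<Omega> F"
  proof (rule Bochner_Integration.integrable_bound[OF Gint Fmeas])
    show "AE \<xi> in \<Omega>. norm (F \<xi>) \<le> norm (G \<xi>)"
      using FG F0 by (intro AE_I2) (smt (verit) real_norm_def)
  qed
  have XF: "integrable \<Omega> (\<lambda>\<xi>. X (fst \<xi>))"
    unfolding A(13)
  proof (rule P.Fubini_integrable)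
    show "(\<lambda>\<xi>. X (fst \<xi>)) \<in> borel_measurable (N \<Otimes>\<^sub>M ?B)" by measurable
    have "(\<lambda>\<omega>. \<integral>c. norm (X (fst (\<omega>, c))) \<partial>?B) = (\<lambda>\<omega>. norm (X \<omega>))"
      using p0 by (simp add: algebra_simps)
    thus "integrable N (\<lambda>\<omega>. \<integral>c. norm (X (fst (\<omega>, c))) \<partial>?B)" using Xint by simp
    show "AE \<omega> in N. integrable ?B (\<lambda>c. X (fst (\<omega>, c)))" by (simp add: intB)
  qed
  have IX: "(\<integral>\<xi>. X (fst \<xi>) \<partial>\<Omega>) = (\<integral>\<omega>. X \<omega> \<partial>N)"
  proof -
    have "(\<integral>\<xi>. X (fst \<xi>) \<partial>\<Omega>) = (\<integral>\<omega>. (\<integral>c. X (fst (\<omega>, c)) \<partial>?B) \<partial>N)"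
      using P.integral_fst'[OF XF[unfolded A(13)]] unfolding A(13) by simp
    also have "\<dots> = (\<integral>\<omega>. X \<omega> \<partial>N)" using p0 by (simp add: algebra_simps)
    finally show ?thesis .
  qed
  have IG: "(\<integral>\<xi>. G \<xi> \<partial>\<Omega>) = p * C1 + 4 * p * L\<^sup>2 * (\<integral>\<omega>. X \<omega> \<partial>N) + (1 - p) * K"
  proof -
    have "(\<integral>\<xi>. G \<xi> \<partial>\<Omega>) = (\<integral>\<omega>. (\<integral>c. G (\<omega>, c) \<partial>?B) \<partial>N)"
      using P.integral_fst'[OF Gint[unfolded A(13)]] unfolding A(13) by simp
    also have "\<dots> = (\<integral>\<omega>. p * C1 + (4 * p * L\<^sup>2) * X \<omega> + (1 - p) * K \<partial>N)"
      unfolding G_def using p0 by (simp add: algebra_simps)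
    also have "\<dots> = p * C1 + (4 * p * L\<^sup>2) * (\<integral>\<omega>. X \<omega> \<partial>N) + (1 - p) * K"
      using Xint by (simp add: N.prob_space)
    finally show ?thesis .
  qed
  have "(\<integral>\<xi>. F \<xi> \<partial>\<Omega>) \<le> (\<integral>\<xi>. G \<xi> \<partial>\<Omega>)"
    by (rule integral_mono[OF Fint Gint FG])
  moreover have IX': "(\<integral>\<xi>. (norm (x1 (fst \<xi>) - y1))\<^sup>2 \<partial>\<Omega>) = (\<integral>\<omega>. X \<omega> \<partial>N)"
    using IX unfolding X_def .
  moreover have "2 * p * (norm (v - gf z))\<^sup>2 + 8 * p * L * bregman f gf z y1
      + 4 * p * L\<^sup>2 * (\<integral>\<omega>. X \<omega> \<partial>N) + (1 - p) * (norm (k - gf z))\<^sup>2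
      = p * C1 + 4 * p * L\<^sup>2 * (\<integral>\<omega>. X \<omega> \<partial>N) + (1 - p) * K"
    unfolding C1_def K_def by (simp add: algebra_simps)
  moreover have "(\<integral>\<xi>. (norm (k1 \<xi> - gf (z1 \<xi>)))\<^sup>2 \<partial>\<Omega>) = (\<integral>\<xi>. F \<xi> \<partial>\<Omega>)"
    unfolding F_def ..
  ultimately show ?thesis using IG by simp
qed

end
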